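(* Let $q$ be a prime power with $q>63$ and let $\mathbb D$ be a $3$-$(q+1,q-4,(q-4)(q-5)(q-6)/60)$ design. Then $\dim_q\mathbb D\ge 4$.
   Context: A $t$-$(v,k,\lambda)$ design is a set of $v$ points with a set of $k$-subsets (blocks) such that every $t$ points lie in exactly $\lambda>0$ blocks. The dimension $\dim_q\mathbb D$ of a design $\mathbb D$ over $\mathrm{GF}(q)$ is the minimum of the ranks over $\mathrm{GF}(q)$ of all matrices obtained from the $(0,1)$ block-by-point incidence matrix of $\mathbb D$ by replacing each entry $1$ with an arbitrary nonzero element of $\mathrm{GF}(q)$; equivalently, the minimum dimension of a linear code over $\mathrm{GF}(q)$ of length $v$ in which every block of $\mathbb D$ is the support of some codeword. *)

theory Defs
  imports Complex_Main "HOL-Library.Function_Algebras"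
begin

definition fscale :: "'F::field \<Rightarrow> ('a \<Rightarrow> 'F) \<Rightarrow> ('a \<Rightarrow> 'F)" where
  "fscale c f = (\<lambda>x. c * f x)"

lemma vector_space_fscale: "vector_space (fscale :: 'F::field \<Rightarrow> ('a \<Rightarrow> 'F) \<Rightarrow> _)"
  by unfold_locales (auto simp: fscale_def fun_eq_iff algebra_simps)

definition is_design :: "nat \<Rightarrow> nat \<Rightarrow> nat \<Rightarrow> nat \<Rightarrow> 'a set \<Rightarrow> 'a set set \<Rightarrow> bool" where
  "is_design t v k lam P B \<longleftrightarrow>
     finite P \<and> card P = v \<and> lam > 0 \<and>
     (\<forall>b\<in>B. b \<subseteq> P \<and> card b = k) \<and>
     (\<forall>T. T \<subseteq> P \<and> card T = t \<longrightarrow> card {b\<in>B. T \<subseteq> b} = lam)"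

definition supp :: "('a \<Rightarrow> 'F::zero) \<Rightarrow> 'a set" where
  "supp c = {x. c x \<noteq> 0}"

text \<open>Linear codes over 'F of length |P|: subspaces of the space of functions P -> 'F
  (functions vanishing outside P).\<close>
definition linear_code :: "'a set \<Rightarrow> ('a \<Rightarrow> 'F::field) set \<Rightarrow> bool" where
  "linear_code P C \<longleftrightarrow> module.subspace fscale C \<and> (\<forall>c\<in>C. supp c \<subseteq> P)"

definition design_dim :: "'F::field itself \<Rightarrow> 'a set \<Rightarrow> 'a set set \<Rightarrow> nat" where
  "design_dim _ P B = (LEAST d. \<exists>C :: ('a \<Rightarrow> 'F) set. linear_code P C \<and>
      vector_space.dim fscale C = d \<and> (\<forall>b\<in>B. \<exists>c\<in>C. supp c = b))"

end

theory Submission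
  imports Defs "HOL-Library.FuncSet"
begin

lemma c3: "6 * (n choose 3) = n * (n - 1) * (n - (2::nat))"
proof (induction n)
  case 0 then show ?case by simp
next
  case (Suc n)
  have "Suc n choose 3 = (n choose 2) + (n choose 3)" by (simp add: numeral_3_eq_3 numeral_2_eq_2)
  moreover have "2 * (n choose 2) = n * (n - 1)"
  proof (induction n)
    case (Suc m) then show ?case by (cases m) (simp_all add: numeral_2_eq_2 algebra_simps)
  qed simp
  ultimately show ?case using Suc by (cases n; cases "n - 1"; simp add: algebra_simps)
qed

lemma design_count:
  assumes "is_design 3 v k lam P B"
  shows "card B * (k choose 3) = lam * (v choose 3)" and "finite B"
proof -
  have fP: "finite P" and cP: "card P = v" and bl: "\<And>b. b \<in> B \<Longrightarrow> b \<subseteq> P \<and> card b = k"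
    and tl: "\<And>T. T \<subseteq> P \<Longrightarrow> card T = 3 \<Longrightarrow> card {b\<in>B. T \<subseteq> b} = lam"
    using assms unfolding is_design_def by auto
  show fB: "finite B" using bl fP by (meson Pow_iff finite_Pow_iff rev_finite_subset subsetI)
  define S3 where "S3 = {T. T \<subseteq> P \<and> card T = 3}"
  have fS: "finite S3" unfolding S3_def using fP by auto
  have "card B * (k choose 3) = (\<Sum>b\<in>B. card {T. T \<subseteq> b \<and> card T = 3})"
  proof -
    have "(\<Sum>b\<in>B. card {T. T \<subseteq> b \<and> card T = 3}) = (\<Sum>b\<in>B. k choose 3)"
      using bl fP by (intro sum.cong refl) (metis n_subsets finite_subset)
    then show ?thesis by simp
  qed
  also have "\<dots> = (\<Sum>b\<in>B. \<Sum>T\<in>S3. if T \<subseteq> b then 1 else 0)"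
  proof (rule sum.cong[OF refl])
    fix b assume "b \<in> B"
    then have "{T. T \<subseteq> b \<and> card T = 3} = {T\<in>S3. T \<subseteq> b}" using bl unfolding S3_def by auto
    then show "card {T. T \<subseteq> b \<and> card T = 3} = (\<Sum>T\<in>S3. if T \<subseteq> b then 1 else 0)"
      using fS by (simp add: sum.inter_filter[symmetric])
  qed
  also have "\<dots> = (\<Sum>T\<in>S3. \<Sum>b\<in>B. if T \<subseteq> b then 1 else 0)" by (rule sum.swap)
  also have "\<dots> = (\<Sum>T\<in>S3. lam)"
  proof (rule sum.cong[OF refl])
    fix T assume "T \<in> S3"
    then have "card {b\<in>B. T \<subseteq> b} = lam" using tl unfolding S3_def by auto
    then show "(\<Sum>b\<in>B. if T \<subseteq> b then 1 else 0) = lam"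
      using fB by (simp add: sum.inter_filter[symmetric])
  qed
  also have "\<dots> = lam * (v choose 3)" using fP cP by (simp add: S3_def n_subsets)
  finally show "card B * (k choose 3) = lam * (v choose 3)" .
qed

lemma finite_funs:
  assumes "finite P" "finite (UNIV :: 'F set)"
  shows "finite {f :: 'a \<Rightarrow> 'F::zero. supp f \<subseteq> P}"
proof -
  have "inj_on (\<lambda>f. restrict f P) {f :: 'a \<Rightarrow> 'F. supp f \<subseteq> P}"
  proof (rule inj_onI)
    fix f g :: "'a \<Rightarrow> 'F" assume f: "f \<in> {f. supp f \<subseteq> P}" and g: "g \<in> {f. supp f \<subseteq> P}"
      and e: "restrict f P = restrict g P"
    show "f = g"
    proof
      fix x show "f x = g x"
      proof (cases "x \<in> P")
        case True then show ?thesis using fun_cong[OF e, of x] by simp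
      next
        case False
        have "f x = 0" using f False unfolding supp_def by blast
        moreover have "g x = 0" using g False unfolding supp_def by blast
        ultimately show ?thesis by simp
      qed
    qed
  qed
  moreover have "(\<lambda>f. restrict f P) ` {f :: 'a \<Rightarrow> 'F. supp f \<subseteq> P} \<subseteq> P \<rightarrow>\<^sub>E UNIV" by auto
  moreover have "finite (P \<rightarrow>\<^sub>E (UNIV :: 'F set))" using assms by (simp add: finite_PiE)
  ultimately show ?thesis by (meson finite_imageD finite_subset)
qed

lemma arith_contra:
  fixes q :: nat
  assumes "q > 63" "(q+1)*q*(q-1) \<le> 60 * (q^2+q+1)"
  shows False
proof -
  define r where "r = q - 64"
  have r: "q = r + 64" using assms(1) unfolding r_def by simp
  show False using assms(2) unfolding r by (simp add: algebra_simps power2_eq_square power3_eq_cube)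
qed

lemma code_bound:
  fixes C :: "('a \<Rightarrow> 'F::{finite,field}) set"
  assumes lc: "linear_code P C" and fP: "finite P" and d: "vector_space.dim fscale C \<le> 3"
  shows "card C \<le> card (UNIV :: 'F set)^3" and "finite C"
proof -
  interpret V: vector_space "fscale :: 'F \<Rightarrow> ('a \<Rightarrow> 'F) \<Rightarrow> ('a \<Rightarrow> 'F)" by (rule vector_space_fscale)
  have "C \<subseteq> {f :: 'a \<Rightarrow> 'F. supp f \<subseteq> P}" using lc unfolding linear_code_def by auto
  then show fC: "finite C" using finite_funs[OF fP, where 'F='F] finite_subset by auto
  obtain B0 where B0: "B0 \<subseteq> C" "V.independent B0" "C \<subseteq> V.span B0" "card B0 = V.dim C"
    by (rule V.basis_exists)
  have fB0: "finite B0" using B0(1) fC finite_subset by auto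
  have Csub: "C \<subseteq> (\<lambda>u. \<Sum>v\<in>B0. fscale (u v) v) ` (B0 \<rightarrow>\<^sub>E UNIV)"
  proof
    fix x assume "x \<in> C"
    then have "x \<in> range (\<lambda>u. \<Sum>v\<in>B0. fscale (u v) v)" using B0(3) V.span_finite[OF fB0] by auto
    then obtain u where u: "x = (\<Sum>v\<in>B0. fscale (u v) v)" by auto
    have "x = (\<Sum>v\<in>B0. fscale (restrict u B0 v) v)" unfolding u by (intro sum.cong refl) simp
    moreover have "restrict u B0 \<in> B0 \<rightarrow>\<^sub>E UNIV" by simp
    ultimately show "x \<in> (\<lambda>u. \<Sum>v\<in>B0. fscale (u v) v) ` (B0 \<rightarrow>\<^sub>E UNIV)" by blast
  qed
  then have "card C \<le> card (B0 \<rightarrow>\<^sub>E (UNIV :: 'F set))"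
  proof -
    have "finite (B0 \<rightarrow>\<^sub>E (UNIV :: 'F set))" using fB0 by (simp add: finite_PiE)
    then have "card C \<le> card ((\<lambda>u. \<Sum>v\<in>B0. fscale (u v) v) ` (B0 \<rightarrow>\<^sub>E (UNIV :: 'F set)))"
      using Csub by (intro card_mono) auto
    also have "\<dots> \<le> card (B0 \<rightarrow>\<^sub>E (UNIV :: 'F set))" using \<open>finite (B0 \<rightarrow>\<^sub>E _)\<close> by (rule card_image_le)
    finally show ?thesis .
  qed
  also have "\<dots> = card (UNIV :: 'F set) ^ card B0" using fB0 by (simp add: card_PiE)
  also have "\<dots> \<le> card (UNIV :: 'F set) ^ 3"
  proof (rule power_increasing)
    show "card B0 \<le> 3" using B0(4) d by simp
    have "(0::'F) \<in> UNIV" by simp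
    then show "1 \<le> card (UNIV :: 'F set)" by (simp add: Suc_leI card_gt_0_iff)
  qed
  finally show "card C \<le> card (UNIV :: 'F set)^3" .
qed

lemma block_bound:
  fixes C :: "('a \<Rightarrow> 'F::{finite,field}) set"
  assumes lc: "linear_code P C" and fC: "finite C" and cov: "\<forall>b\<in>B. \<exists>c\<in>C. supp c = b"
    and ne: "\<forall>b\<in>B. b \<noteq> {}" and fB: "finite B"
  shows "card B * (card (UNIV :: 'F set) - 1) \<le> card C - 1"
proof -
  interpret V: vector_space "fscale :: 'F \<Rightarrow> ('a \<Rightarrow> 'F) \<Rightarrow> ('a \<Rightarrow> 'F)" by (rule vector_space_fscale)
  have sub: "V.subspace C" using lc unfolding linear_code_def by auto
  define N where "N b = {c\<in>C. supp c = b}" for b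
  have fN: "\<And>b. finite (N b)" using fC unfolding N_def by auto
  have disj: "\<forall>b\<in>B. \<forall>b'\<in>B. b \<noteq> b' \<longrightarrow> N b \<inter> N b' = {}" unfolding N_def by auto
  have lb: "card (UNIV :: 'F set) - 1 \<le> card (N b)" if b: "b \<in> B" for b
  proof -
    obtain c where c: "c \<in> C" "supp c = b" using cov b by auto
    obtain x where x: "x \<in> b" using ne b by auto
    have cx: "c x \<noteq> 0" using x c unfolding supp_def by auto
    have hs1: "(\<lambda>a. fscale a c) ` (UNIV - {0}) \<subseteq> N b"
    proof
      fix y assume "y \<in> (\<lambda>a. fscale a c) ` (UNIV - {0})"
      then obtain a where a: "a \<noteq> 0" "y = fscale a c" by auto
      have "y \<in> C" using V.subspace_scale[OF sub c(1)] a by simp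
      moreover have "supp y = b" using a c unfolding supp_def fscale_def by auto
      ultimately show "y \<in> N b" unfolding N_def by auto
    qed
    have hs2: "inj_on (\<lambda>a. fscale a c) (UNIV - {0})"
    proof (rule inj_onI)
      fix a a' assume e: "fscale a c = fscale a' c"
      have "a * c x = a' * c x" using fun_cong[OF e, of x] unfolding fscale_def by simp
      then show "a = a'" using cx by simp
    qed
    have h1: "card ((\<lambda>a. fscale a c) ` (UNIV - {0})) \<le> card (N b)"
      by (rule card_mono[OF fN hs1])
    have h2: "card ((\<lambda>a. fscale a c) ` (UNIV - {0::'F})) = card (UNIV - {0::'F})"
      by (rule card_image[OF hs2])
    from h1 h2 have "card (UNIV - {0::'F}) \<le> card (N b)" by simp
    moreover have "card (UNIV - {0::'F}) = card (UNIV :: 'F set) - 1" by (simp add: card_Diff_singleton)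
    ultimately show ?thesis by simp
  qed
  have "card B * (card (UNIV :: 'F set) - 1) \<le> (\<Sum>b\<in>B. card (N b))"
    using sum_bounded_below[of B "card (UNIV :: 'F set) - 1" "\<lambda>b. card (N b)", OF lb] by simp
  also have "\<dots> = card (\<Union>b\<in>B. N b)" using fN fB disj by (intro card_UN_disjoint[symmetric]) auto
  also have "\<dots> \<le> card (C - {0})"
  proof (rule card_mono)
    show "finite (C - {0})" using fC by auto
    show "(\<Union>b\<in>B. N b) \<subseteq> C - {0}"
    proof
      fix y assume "y \<in> (\<Union>b\<in>B. N b)"
      then obtain b where "b \<in> B" "y \<in> C" "supp y = b" unfolding N_def by auto
      moreover have "supp (0 :: 'a \<Rightarrow> 'F) = {}" unfolding supp_def by simp
      ultimately show "y \<in> C - {0}" using ne by auto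
    qed
  qed
  also have "\<dots> = card C - 1" using V.subspace_0[OF sub] fC by (simp add: card_Diff_singleton)
  finally show ?thesis .
qed

theorem theorem30:
  fixes P :: "'a set" and B :: "'a set set" and q lam :: nat
  assumes "card (UNIV :: 'F::{finite,field} set) = q"
    and "q > 63"
    and "60 * lam = (q - 4) * (q - 5) * (q - 6)"
    and "is_design 3 (q + 1) (q - 4) lam P B"
  shows "design_dim TYPE('F) P B \<ge> 4"
proof -
  interpret V: vector_space "fscale :: 'F \<Rightarrow> ('a \<Rightarrow> 'F) \<Rightarrow> ('a \<Rightarrow> 'F)" by (rule vector_space_fscale)
  note des = assms(4)
  have fP: "finite P" and lam0: "lam > 0" and bl: "\<And>b. b \<in> B \<Longrightarrow> b \<subseteq> P \<and> card b = q - 4"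
    using des unfolding is_design_def by auto
  have cnt: "card B * ((q-4) choose 3) = lam * ((q+1) choose 3)" and fB: "finite B"
    using design_count[OF des] by auto
  have "card B * (6 * ((q-4) choose 3)) = lam * (6 * ((q+1) choose 3))"
    using cnt by (metis mult.left_commute)
  moreover have "q - 4 - 1 = q - 5" "q - 4 - 2 = q - 6" "q + 1 - 1 = q" "q + 1 - 2 = q - 1" by auto
  ultimately have "card B * ((q-4)*(q-5)*(q-6)) = lam * ((q+1)*q*(q-1))"
    unfolding c3 by simp
  then have "lam * (60 * card B) = lam * ((q+1)*q*(q-1))"
    using assms(3) by (metis mult.commute mult.left_commute)
  then have cB: "60 * card B = (q+1)*q*(q-1)" using lam0 by simp
  define Q where "Q d = (\<exists>C :: ('a \<Rightarrow> 'F) set. linear_code P C \<and>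
      vector_space.dim fscale C = d \<and> (\<forall>b\<in>B. \<exists>c\<in>C. supp c = b))" for d
  have dd: "design_dim TYPE('F) P B = (LEAST d. Q d)" unfolding design_dim_def Q_def by simp
  define C0 where "C0 = {f :: 'a \<Rightarrow> 'F. supp f \<subseteq> P}"
  have "linear_code P C0"
    unfolding linear_code_def
  proof
    show "V.subspace C0"
    proof (rule V.subspaceI)
      show "0 \<in> C0" unfolding C0_def supp_def by simp
      show "x + y \<in> C0" if "x \<in> C0" "y \<in> C0" for x y
      proof -
        have "x z + y z = 0" if "z \<notin> P" for z
        proof -
          have "x z = 0" using \<open>x \<in> C0\<close> that unfolding C0_def supp_def by blast
          moreover have "y z = 0" using \<open>y \<in> C0\<close> that unfolding C0_def supp_def by blast
          ultimately show ?thesis by simp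
        qed
        then show ?thesis unfolding C0_def supp_def by auto
      qed
      show "fscale c x \<in> C0" if "x \<in> C0" for c x
        using that unfolding C0_def supp_def fscale_def by auto
    qed
    show "\<forall>c\<in>C0. supp c \<subseteq> P" unfolding C0_def by auto
  qed
  moreover have "\<forall>b\<in>B. \<exists>c\<in>C0. supp c = b"
  proof
    fix b assume "b \<in> B"
    then have "b \<subseteq> P" using bl by auto
    moreover have "supp (\<lambda>x. if x \<in> b then (1::'F) else 0) = b" unfolding supp_def by auto
    ultimately show "\<exists>c\<in>C0. supp c = b" unfolding C0_def by (intro bexI[of _ "\<lambda>x. if x \<in> b then (1::'F) else 0"]) auto
  qed
  ultimately have "Q (vector_space.dim fscale C0)" unfolding Q_def by blast
  then have "Q (LEAST d. Q d)" by (rule LeastI)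
  then obtain C :: "('a \<Rightarrow> 'F) set" where C: "linear_code P C" "vector_space.dim fscale C = (LEAST d. Q d)"
    "\<forall>b\<in>B. \<exists>c\<in>C. supp c = b" unfolding Q_def by blast
  show ?thesis
  proof (rule ccontr)
    assume "\<not> 4 \<le> design_dim TYPE('F) P B"
    then have d3: "vector_space.dim fscale C \<le> 3" using C(2) dd by simp
    have cC: "card C \<le> q^3" and fC: "finite C" using code_bound[OF C(1) fP d3] assms(1) by auto
    have ne: "\<forall>b\<in>B. b \<noteq> {}" using bl assms(2) by fastforce
    have "card B * (q - 1) \<le> card C - 1" using block_bound[OF C(1) fC C(3) ne fB] assms(1) by simp
    also have "\<dots> \<le> q^3 - 1" using cC by simp
    also have "\<dots> = (q-1)*(q^2+q+1)" using assms(2) by (cases q) (simp_all add: algebra_simps power2_eq_square power3_eq_cube)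
    finally have "card B * (q-1) \<le> (q-1)*(q^2+q+1)" .
    then have "(q-1) * card B \<le> (q-1)*(q^2+q+1)" by (simp only: mult.commute)
    moreover have "0 < q - 1" using assms(2) by simp
    ultimately have "card B \<le> q^2+q+1" using mult_le_cancel1 by blast
    then have "60 * card B \<le> 60*(q^2+q+1)" by simp
    then have "(q+1)*q*(q-1) \<le> 60*(q^2+q+1)" unfolding cB .
    then show False using arith_contra assms(2) by blast
  qed
qed

end
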